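(* The connected subgraph arrangements of the following two graphs are not factored: (1) the almost path graph $A_{3,2}$ (the star with central vertex $2$ and leaves $1,3,4$); (2) the cycle graph $C_4$.
   Context: For a finite simple graph $G=(N,E)$ with $N=\{1,\dots,n\}$ and $I\subseteq N$, $G[I]$ denotes the induced subgraph on $I$, and $H_I=\ker\big(\sum_{i\in I}x_i\big)$, where $x_1,\dots,x_n$ are the coordinate functions. The connected subgraph arrangement of $G$ is $\mathcal{A}_G=\{H_I:\emptyset\neq I\subseteq N,\ G[I]\text{ connected}\}$ over $\mathbb{Q}$. $A_{3,2}$ has vertices $1,2,3,4$ and edges $\{1,2\},\{2,3\},\{2,4\}$; $C_4$ has vertices $1,2,3,4$ and edges $\{1,2\},\{2,3\},\{3,4\},\{1,4\}$. A partition $\pi=(\pi_1,\dots,\pi_s)$ of an arrangement $\mathcal{A}$ is nice if (i) for every choice $H_i\in\pi_i$ the $s$ defining forms are linearly independent, and (ii) for every $X\in L(\mathcal{A})\setminus\{V\}$ the induced partition of $\mathcal{A}_X=\{H\in\mathcal{A}:X\subseteq H\}$ into the nonempty sets $\pi_i\cap\mathcal{A}_X$ has a singleton block. $\mathcal{A}$ is factored if it admits a nice partition. *)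

theory Defs
  imports Complex_Main
begin

text \<open>Ambient space Q^n: vectors are functions nat => rat supported on {1..n}.\<close>
definition ambient :: "nat \<Rightarrow> (nat \<Rightarrow> rat) set" where
  "ambient n = {x. \<forall>i. i \<notin> {1..n} \<longrightarrow> x i = 0}"

definition hyp :: "nat \<Rightarrow> nat set \<Rightarrow> (nat \<Rightarrow> rat) set" where
  "hyp n I = {x \<in> ambient n. (\<Sum>i\<in>I. x i) = 0}"

definition form_ker :: "nat \<Rightarrow> (nat \<Rightarrow> rat) \<Rightarrow> (nat \<Rightarrow> rat) set" where
  "form_ker n a = {x \<in> ambient n. (\<Sum>i\<in>{1..n}. a i * x i) = 0}"

definition defining_form :: "nat \<Rightarrow> (nat \<Rightarrow> rat) \<Rightarrow> (nat \<Rightarrow> rat) set \<Rightarrow> bool" where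
  "defining_form n a H \<longleftrightarrow> a \<in> ambient n \<and> a \<noteq> (\<lambda>_. 0) \<and> H = form_ker n a"

definition lin_indep_family :: "'b set \<Rightarrow> ('b \<Rightarrow> nat \<Rightarrow> rat) \<Rightarrow> bool" where
  "lin_indep_family P a \<longleftrightarrow>
     (\<forall>c. (\<lambda>i. \<Sum>B\<in>P. c B * a B i) = (\<lambda>_. 0) \<longrightarrow> (\<forall>B\<in>P. c B = 0))"

text \<open>Graph on vertex set {1..n} with edge set E (2-element sets);
  induced subgraph G[I] connected.\<close>
definition induced_connected :: "nat set set \<Rightarrow> nat set \<Rightarrow> bool" where
  "induced_connected E I \<longleftrightarrow> I \<noteq> {} \<and>
     (\<forall>u\<in>I. \<forall>v\<in>I. (u, v) \<in> ({(x, y). x \<in> I \<and> y \<in> I \<and> {x, y} \<in> E})\<^sup>*)"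

definition csa :: "nat \<Rightarrow> nat set set \<Rightarrow> (nat \<Rightarrow> rat) set set" where
  "csa n E = {hyp n I | I. I \<subseteq> {1..n} \<and> induced_connected E I}"

text \<open>Intersection lattice L(A): intersections of subsets of A (V is the empty intersection).\<close>
definition lattice_L :: "nat \<Rightarrow> (nat \<Rightarrow> rat) set set \<Rightarrow> (nat \<Rightarrow> rat) set set" where
  "lattice_L n A = {ambient n \<inter> \<Inter>S | S. S \<subseteq> A}"

definition localization :: "(nat \<Rightarrow> rat) set set \<Rightarrow> (nat \<Rightarrow> rat) set \<Rightarrow> (nat \<Rightarrow> rat) set set" where
  "localization A X = {H \<in> A. X \<subseteq> H}"

definition is_partition :: "'a set set \<Rightarrow> 'a set \<Rightarrow> bool" where
  "is_partition P A \<longleftrightarrow> (\<forall>B\<in>P. B \<noteq> {}) \<and> \<Union>P = A \<and>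
     (\<forall>B\<in>P. \<forall>C\<in>P. B \<noteq> C \<longrightarrow> B \<inter> C = {})"

definition nice_partition :: "nat \<Rightarrow> (nat \<Rightarrow> rat) set set \<Rightarrow> (nat \<Rightarrow> rat) set set set \<Rightarrow> bool" where
  "nice_partition n A P \<longleftrightarrow> is_partition P A \<and>
     (\<forall>h a. (\<forall>B\<in>P. h B \<in> B \<and> defining_form n (a B) (h B)) \<longrightarrow> lin_indep_family P a) \<and>
     (\<forall>X \<in> lattice_L n A - {ambient n}.
        \<exists>B\<in>P. card (B \<inter> localization A X) = 1)"

definition factored :: "nat \<Rightarrow> (nat \<Rightarrow> rat) set set \<Rightarrow> bool" where
  "factored n A \<longleftrightarrow> (\<exists>P. nice_partition n A P)"

definition A32_edges :: "nat set set" where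
  "A32_edges = {{1,2},{2,3},{2,4}}"

definition C4_edges :: "nat set set" where
  "C4_edges = {{1,2},{2,3},{3,4},{1,4}}"

end

theory Submission
  imports Defs
begin

definition ind :: "nat set \<Rightarrow> nat \<Rightarrow> rat" where
  "ind I = (\<lambda>i. if i \<in> I then 1 else 0)"

lemma hyp_sub: "hyp n I \<subseteq> ambient n"
  unfolding hyp_def by auto

lemma defform_ind:
  assumes "I \<subseteq> {1..n}" "I \<noteq> {}"
  shows "defining_form n (ind I) (hyp n I)"
proof -
  have amb: "ind I \<in> ambient n" using assms(1) unfolding ambient_def ind_def by auto
  have nz: "ind I \<noteq> (\<lambda>_. 0)"
  proof
    assume h: "ind I = (\<lambda>_. 0)"
    obtain i where "i \<in> I" using assms(2) by auto
    then have "ind I i = 1" unfolding ind_def by simp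
    then show False using h by simp
  qed
  have "\<And>x. (\<Sum>i\<in>{1..n}. ind I i * x i) = (\<Sum>i\<in>I. x i)"
  proof -
    fix x :: "nat \<Rightarrow> rat"
    have "(\<Sum>i\<in>{1..n}. ind I i * x i) = (\<Sum>i\<in>{1..n}. if i \<in> I then x i else 0)"
      unfolding ind_def by (rule sum.cong) auto
    also have "\<dots> = sum x ({1..n} \<inter> I)" by (rule sum.inter_restrict[symmetric]) simp
    also have "{1..n} \<inter> I = I" using assms(1) by auto
    finally show "(\<Sum>i\<in>{1..n}. ind I i * x i) = (\<Sum>i\<in>I. x i)" .
  qed
  then have "form_ker n (ind I) = hyp n I" unfolding form_ker_def hyp_def by simp
  then show ?thesis using amb nz unfolding defining_form_def by simp
qed

definition ev :: "nat \<Rightarrow> nat \<Rightarrow> rat" where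
  "ev j = (\<lambda>i. if i = j then 1 else 0)"

lemma sum_ev: "finite I \<Longrightarrow> (\<Sum>i\<in>I. ev j i) = (if j \<in> I then 1 else 0)"
  unfolding ev_def by (simp add: sum.delta)

lemma hyp_sep:
  assumes "I \<subseteq> {1..n}" "J \<subseteq> {1..n}" "J \<noteq> {}" "i \<in> I" "i \<notin> J"
  shows "\<exists>x. x \<in> hyp n I \<and> x \<notin> hyp n J"
proof -
  obtain j where j: "j \<in> J" using assms(3) by auto
  have fI: "finite I" "finite J" using assms(1,2) finite_subset by blast+
  show ?thesis
  proof (cases "j \<in> I")
    case True
    define x where "x = (\<lambda>k. ev i k - ev j k)"
    have ij: "i \<noteq> j" using j assms(5) by auto
    have "x \<in> ambient n" using assms j unfolding x_def ambient_def ev_def by auto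
    moreover have "(\<Sum>k\<in>I. x k) = 0" unfolding x_def using fI True assms(4)
      by (simp add: sum_subtractf sum_ev)
    moreover have "(\<Sum>k\<in>J. x k) \<noteq> 0" unfolding x_def using fI j assms(5)
      by (simp add: sum_subtractf sum_ev)
    ultimately show ?thesis unfolding hyp_def by blast
  next
    case False
    define x where "x = ev j"
    have "x \<in> ambient n" using assms j unfolding x_def ambient_def ev_def by auto
    moreover have "(\<Sum>k\<in>I. x k) = 0" unfolding x_def using fI False
      by (simp add: sum_ev)
    moreover have "(\<Sum>k\<in>J. x k) \<noteq> 0" unfolding x_def using fI j
      by (simp add: sum_ev)
    ultimately show ?thesis unfolding hyp_def by blast
  qed
qed

lemma hyp_inj:
  assumes "I \<subseteq> {1..n}" "J \<subseteq> {1..n}" "I \<noteq> {}" "J \<noteq> {}" "I \<noteq> J"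
  shows "hyp n I \<noteq> hyp n J"
proof -
  obtain i where "(i \<in> I \<and> i \<notin> J) \<or> (i \<in> J \<and> i \<notin> I)" using assms(5) by blast
  then show ?thesis using hyp_sep[OF assms(1,2,4)] hyp_sep[OF assms(2,1,3)] by blast
qed

lemma pair_con:
  assumes np: "nice_partition n A P" and sub: "\<forall>H\<in>A. H \<subseteq> ambient n"
    and HA: "H \<in> A" and KA: "K \<in> A" and HK: "H \<noteq> K"
    and loc: "localization A (H \<inter> K) = {H, K}"
    and B: "B \<in> P" "H \<in> B" "K \<in> B"
  shows False
proof -
  have part: "is_partition P A" and ii: "\<forall>X \<in> lattice_L n A - {ambient n}.
        \<exists>B\<in>P. card (B \<inter> localization A X) = 1"
    using np unfolding nice_partition_def by auto
  have "H \<inter> K = ambient n \<inter> \<Inter>{H, K}" using sub HA KA by auto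
  then have XL: "H \<inter> K \<in> lattice_L n A" unfolding lattice_L_def using HA KA by blast
  have XV: "H \<inter> K \<noteq> ambient n"
  proof
    assume "H \<inter> K = ambient n"
    then have "H = ambient n" "K = ambient n" using sub HA KA by auto
    then show False using HK by simp
  qed
  have "H \<inter> K \<in> lattice_L n A - {ambient n}" using XL XV by blast
  from ii[rule_format, OF this] obtain B' where B': "B' \<in> P" "card (B' \<inter> {H, K}) = 1"
    unfolding loc by blast
  show False
  proof (cases "B' = B")
    case True
    then have "B' \<inter> {H, K} = {H, K}" using B by auto
    then show False using B' HK by simp
  next
    case False
    have "\<forall>B\<in>P. \<forall>C\<in>P. B \<noteq> C \<longrightarrow> B \<inter> C = {}" using part unfolding is_partition_def by simp
    then have "B' \<inter> B = {}" using B(1) B'(1) False by simp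
    then have "B' \<inter> {H, K} = {}" using B by auto
    then show False using B' by simp
  qed
qed

lemma circ_con:
  assumes np: "nice_partition n A P" and fin: "finite A"
    and dfs: "\<forall>H\<in>A. \<exists>a. defining_form n a H"
    and B: "B1 \<in> P" "B2 \<in> P" "B3 \<in> P" "B1 \<noteq> B2" "B2 \<noteq> B3" "B1 \<noteq> B3"
    and H: "H1 \<in> B1" "H2 \<in> B2" "H3 \<in> B3"
    and a: "defining_form n a1 H1" "defining_form n a2 H2" "defining_form n a3 H3"
    and dep: "\<And>i. a1 i + a2 i - a3 i = 0"
  shows False
proof -
  have part: "is_partition P A" using np unfolding nice_partition_def by (elim conjE)
  have i: "\<forall>h a. (\<forall>B\<in>P. h B \<in> B \<and> defining_form n (a B) (h B)) \<longrightarrow> lin_indep_family P a"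
    using np unfolding nice_partition_def by (elim conjE)
  have finP: "finite P"
  proof -
    have "P \<subseteq> Pow A" using part unfolding is_partition_def by auto
    then show ?thesis using fin finite_subset by blast
  qed
  define h where "h B = (if B = B1 then H1 else if B = B2 then H2 else if B = B3 then H3 else (SOME H. H \<in> B))" for B
  define af where "af B = (if B = B1 then a1 else if B = B2 then a2 else if B = B3 then a3 else (SOME a. defining_form n a (h B)))" for B
  have "\<forall>B\<in>P. h B \<in> B \<and> defining_form n (af B) (h B)"
  proof
    fix B assume BP: "B \<in> P"
    show "h B \<in> B \<and> defining_form n (af B) (h B)"
    proof (cases "B = B1 \<or> B = B2 \<or> B = B3")
      case True
      then consider "B = B1" | "B = B2" "B \<noteq> B1" | "B = B3" "B \<noteq> B1" "B \<noteq> B2" by blast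
      then show ?thesis
      proof cases
        case 1 then show ?thesis using H a unfolding h_def af_def by simp
      next
        case 2 then show ?thesis using H a unfolding h_def af_def by simp
      next
        case 3 then show ?thesis using H a unfolding h_def af_def by simp
      qed
    next
      case False
      have "B \<noteq> {}" using part BP unfolding is_partition_def by auto
      then obtain H0 where "H0 \<in> B" by blast
      have hdef: "h B = (SOME H. H \<in> B)" using False unfolding h_def by simp
      have hB: "h B \<in> B" unfolding hdef by (rule someI) (rule \<open>H0 \<in> B\<close>)
      then have "h B \<in> A" using part BP unfolding is_partition_def by auto
      then obtain a where "defining_form n a (h B)" using dfs by auto
      then have "defining_form n (SOME a. defining_form n a (h B)) (h B)" by (rule someI[where P="\<lambda>a. defining_form n a (h B)"])
      moreover have "af B = (SOME a. defining_form n a (h B))" using False unfolding af_def by simp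
      ultimately have "defining_form n (af B) (h B)" by simp
      then show ?thesis using hB by simp
    qed
  qed
  then have li: "lin_indep_family P af" using i[THEN spec[of _ h], THEN spec[of _ af]] by (rule rev_mp)
  define c where "c B = (if B = B1 then 1 else if B = B2 then 1 else if B = B3 then -1 else (0::rat))" for B
  have "(\<lambda>i. \<Sum>B\<in>P. c B * af B i) = (\<lambda>_. 0)"
  proof
    fix i
    have "(\<Sum>B\<in>P. c B * af B i) = (\<Sum>B\<in>{B1,B2,B3}. c B * af B i)"
    proof (rule sum.mono_neutral_right)
      show "finite P" by (rule finP)
      show "{B1, B2, B3} \<subseteq> P" using B by simp
      show "\<forall>B\<in>P - {B1, B2, B3}. c B * af B i = 0" unfolding c_def by simp
    qed
    also have "\<dots> = c B1 * af B1 i + c B2 * af B2 i + c B3 * af B3 i" using B(4,5,6) by simp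
    also have "\<dots> = a1 i + a2 i - a3 i" using B(4,5,6) unfolding c_def af_def by simp
    also have "\<dots> = 0" by (rule dep)
    finally show "(\<Sum>B\<in>P. c B * af B i) = 0" .
  qed
  moreover have "\<forall>c. (\<lambda>i. \<Sum>B\<in>P. c B * af B i) = (\<lambda>_. 0) \<longrightarrow> (\<forall>B\<in>P. c B = 0)"
    using li unfolding lin_indep_family_def .
  ultimately have "\<forall>B\<in>P. c B = 0" by blast
  then have "c B1 = 0" using B(1) by blast
  then show False unfolding c_def by simp
qed

lemma circ_ind:
  assumes np: "nice_partition n A P" and fin: "finite A"
    and dfs: "\<forall>H\<in>A. \<exists>a. defining_form n a H"
    and IJ: "I \<subseteq> {1..n}" "J \<subseteq> {1..n}" "I \<noteq> {}" "J \<noteq> {}" "I \<inter> J = {}"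
    and B: "B1 \<in> P" "B2 \<in> P" "B3 \<in> P"
    and H: "hyp n I \<in> B1" "hyp n J \<in> B2" "hyp n (I \<union> J) \<in> B3"
  shows "\<not> (B1 \<noteq> B2 \<and> B2 \<noteq> B3 \<and> B1 \<noteq> B3)"
proof
  assume d: "B1 \<noteq> B2 \<and> B2 \<noteq> B3 \<and> B1 \<noteq> B3"
  show False
    apply (rule circ_con[OF np fin dfs B _ _ _ H defform_ind defform_ind defform_ind])
    using d IJ by (auto simp: ind_def)
qed

lemma loc_pair:
  assumes A: "A = hyp n ` S" and I: "I1 \<in> S" "I2 \<in> S"
    and w: "w \<in> ambient n" "sum w I1 = 0" "sum w I2 = 0"
    and S: "\<forall>I\<in>S. sum w I = 0 \<longrightarrow> I = I1 \<or> I = I2"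
  shows "localization A (hyp n I1 \<inter> hyp n I2) = {hyp n I1, hyp n I2}"
proof -
  have "w \<in> hyp n I1 \<inter> hyp n I2" using w unfolding hyp_def by auto
  then show ?thesis using A I S unfolding localization_def hyp_def by auto
qed

lemma ic_star:
  assumes "c \<in> I" "\<forall>u\<in>I. u \<noteq> c \<longrightarrow> {u, c} \<in> E"
  shows "induced_connected E I"
  unfolding induced_connected_def
proof (intro conjI ballI)
  show "I \<noteq> {}" using assms by auto
  fix u v assume uv: "u \<in> I" "v \<in> I"
  let ?R = "{(x, y). x \<in> I \<and> y \<in> I \<and> {x, y} \<in> E}"
  have 1: "(u, c) \<in> ?R\<^sup>*"
    using uv assms by (cases "u = c") (auto intro: r_into_rtrancl)
  have 2: "(c, v) \<in> ?R\<^sup>*"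
    using uv assms by (cases "v = c") (auto intro!: r_into_rtrancl simp: insert_commute)
  show "(u, v) \<in> ?R\<^sup>*" using 1 2 by (rule rtrancl_trans)
qed

lemma ic_union:
  assumes "induced_connected E I1" "induced_connected E I2" "I1 \<inter> I2 \<noteq> {}"
  shows "induced_connected E (I1 \<union> I2)"
  unfolding induced_connected_def
proof (intro conjI ballI)
  show "I1 \<union> I2 \<noteq> {}" using assms(3) by auto
  let ?R = "{(x, y). x \<in> I1 \<union> I2 \<and> y \<in> I1 \<union> I2 \<and> {x, y} \<in> E}"
  let ?R1 = "{(x, y). x \<in> I1 \<and> y \<in> I1 \<and> {x, y} \<in> E}"
  let ?R2 = "{(x, y). x \<in> I2 \<and> y \<in> I2 \<and> {x, y} \<in> E}"
  have m1: "?R1\<^sup>* \<subseteq> ?R\<^sup>*" by (rule rtrancl_mono) auto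
  have m2: "?R2\<^sup>* \<subseteq> ?R\<^sup>*" by (rule rtrancl_mono) auto
  have c1: "\<forall>u\<in>I1. \<forall>v\<in>I1. (u, v) \<in> ?R\<^sup>*" using assms(1) m1 unfolding induced_connected_def by blast
  have c2: "\<forall>u\<in>I2. \<forall>v\<in>I2. (u, v) \<in> ?R\<^sup>*" using assms(2) m2 unfolding induced_connected_def by blast
  obtain z where z: "z \<in> I1" "z \<in> I2" using assms(3) by auto
  fix u v assume "u \<in> I1 \<union> I2" "v \<in> I1 \<union> I2"
  then have "(u, z) \<in> ?R\<^sup>*" "(z, v) \<in> ?R\<^sup>*" using c1 c2 z by blast+
  then show "(u, v) \<in> ?R\<^sup>*" by (rule rtrancl_trans)
qed

lemma ic_noedge:
  assumes "induced_connected E I" "u \<in> I" "v \<in> I" "u \<noteq> v"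
  shows "\<exists>w\<in>I. {u, w} \<in> E"
proof -
  let ?R = "{(x, y). x \<in> I \<and> y \<in> I \<and> {x, y} \<in> E}"
  have "(u, v) \<in> ?R\<^sup>*" using assms unfolding induced_connected_def by blast
  then show ?thesis using assms(4) by (cases rule: converse_rtranclE) auto
qed

lemma circ_blk:
  assumes np: "nice_partition n A P" and A: "A = hyp n ` S" and finS: "finite S"
    and Sok: "\<forall>I\<in>S. I \<subseteq> {1..n} \<and> I \<noteq> {}"
    and IJ: "I \<in> S" "J \<in> S" "K \<in> S" "I \<inter> J = {}" "K = I \<union> J"
    and B: "B1 \<in> P" "B2 \<in> P" "B3 \<in> P"
    and H: "hyp n I \<in> B1" "hyp n J \<in> B2" "hyp n K \<in> B3"
  shows "\<not> (B1 \<noteq> B2 \<and> B2 \<noteq> B3 \<and> B1 \<noteq> B3)"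
proof -
  have fA: "finite A" using A finS by simp
  have dfs: "\<forall>H\<in>A. \<exists>a. defining_form n a H"
  proof
    fix H assume "H \<in> A"
    then obtain I0 where "I0 \<in> S" "H = hyp n I0" using A by blast
    then have "I0 \<subseteq> {1..n}" "I0 \<noteq> {}" "H = hyp n I0" using Sok by auto
    then have "defining_form n (ind I0) H" using defform_ind by simp
    then show "\<exists>a. defining_form n a H" by blast
  qed
  have s: "I \<subseteq> {1..n}" "J \<subseteq> {1..n}" "I \<noteq> {}" "J \<noteq> {}" using Sok IJ(1,2) by auto
  have H3: "hyp n (I \<union> J) \<in> B3" using H(3) IJ(5) by simp
  show ?thesis by (rule circ_ind[OF np fA dfs s IJ(4) B H(1,2) H3])
qed

lemma pair_blk:
  assumes np: "nice_partition n A P" and A: "A = hyp n ` S"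
    and Sok: "\<forall>I\<in>S. I \<subseteq> {1..n} \<and> I \<noteq> {}"
    and I: "I1 \<in> S" "I2 \<in> S" "I1 \<noteq> I2"
    and w: "w \<in> ambient n" "sum w I1 = 0" "sum w I2 = 0"
    and S: "\<forall>I\<in>S. sum w I = 0 \<longrightarrow> I = I1 \<or> I = I2"
    and B: "B \<in> P" "hyp n I1 \<in> B" "hyp n I2 \<in> B"
  shows False
proof (rule pair_con[OF np _ _ _ _ loc_pair[OF A I(1,2) w S] B])
  show "\<forall>H\<in>A. H \<subseteq> ambient n" using A hyp_sub by auto
  show "hyp n I1 \<in> A" "hyp n I2 \<in> A" using A I by auto
  show "hyp n I1 \<noteq> hyp n I2" using Sok I by (intro hyp_inj) auto
qed

lemma blk_exists:
  assumes np: "nice_partition n A P" and A: "A = hyp n ` S"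
  shows "\<exists>blk. \<forall>I\<in>S. blk I \<in> P \<and> hyp n I \<in> blk I"
proof -
  have "\<Union>P = A" using np unfolding nice_partition_def is_partition_def by (elim conjE)
  then have "\<forall>I\<in>S. \<exists>B. B \<in> P \<and> hyp n I \<in> B" using A by blast
  then show ?thesis by (rule bchoice)
qed

definition wv :: "rat \<Rightarrow> rat \<Rightarrow> rat \<Rightarrow> rat \<Rightarrow> nat \<Rightarrow> rat" where
  "wv a b c d = (\<lambda>i. if i = 1 then a else if i = 2 then b else if i = 3 then c else if i = 4 then d else 0)"

lemma wv_amb: "wv a b c d \<in> ambient 4"
  unfolding wv_def ambient_def by auto

lemma wv_simps: "wv a b c d 1 = a" "wv a b c d (Suc 0) = a" "wv a b c d 2 = b" "wv a b c d 3 = c" "wv a b c d 4 = d"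
  unfolding wv_def by auto


lemma pow4: "Pow {1,2,3,4::nat} = {{},{1},{2},{3},{4},{1,2},{1,3},{1,4},{2,3},{2,4},{3,4},{1,2,3},{1,2,4},{1,3,4},{2,3,4},{1,2,3,4}}"
  by (simp add: Pow_insert insert_commute)
lemma iv: "{1..4::nat} = {1,2,3,4}" by auto

definition SA32 :: "nat set set" where "SA32 = {{1}, {2}, {3}, {4}, {1,2}, {2,3}, {2,4}, {1,2,3}, {1,2,4}, {2,3,4}, {1,2,3,4}}"
lemma ic_A32_s1: "induced_connected A32_edges {1}"
  by (rule ic_star[of 1]) (auto simp: A32_edges_def insert_commute)
lemma ic_A32_s2: "induced_connected A32_edges {2}"
  by (rule ic_star[of 2]) (auto simp: A32_edges_def insert_commute)
lemma ic_A32_s3: "induced_connected A32_edges {3}"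
  by (rule ic_star[of 3]) (auto simp: A32_edges_def insert_commute)
lemma ic_A32_s4: "induced_connected A32_edges {4}"
  by (rule ic_star[of 4]) (auto simp: A32_edges_def insert_commute)
lemma ic_A32_s12: "induced_connected A32_edges {1,2}"
  by (rule ic_star[of 1]) (auto simp: A32_edges_def insert_commute)
lemma ic_A32_s23: "induced_connected A32_edges {2,3}"
  by (rule ic_star[of 2]) (auto simp: A32_edges_def insert_commute)
lemma ic_A32_s24: "induced_connected A32_edges {2,4}"
  by (rule ic_star[of 2]) (auto simp: A32_edges_def insert_commute)
lemma ic_A32_s123: "induced_connected A32_edges {1,2,3}"
  by (rule ic_star[of 2]) (auto simp: A32_edges_def insert_commute)
lemma ic_A32_s124: "induced_connected A32_edges {1,2,4}"
  by (rule ic_star[of 2]) (auto simp: A32_edges_def insert_commute)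
lemma ic_A32_s234: "induced_connected A32_edges {2,3,4}"
  by (rule ic_star[of 2]) (auto simp: A32_edges_def insert_commute)
lemma ic_A32_s1234: "induced_connected A32_edges {1,2,3,4}"
  by (rule ic_star[of 2]) (auto simp: A32_edges_def insert_commute)
lemma csa_A32: "csa 4 A32_edges = hyp 4 ` SA32"
proof -
  have e: "{I. I \<subseteq> {1..4} \<and> induced_connected A32_edges I} = SA32"
  proof
    show "{I. I \<subseteq> {1..4} \<and> induced_connected A32_edges I} \<subseteq> SA32"
    proof
      fix I assume "I \<in> {I. I \<subseteq> {1..4} \<and> induced_connected A32_edges I}"
      then have I: "I \<in> Pow {1,2,3,4}" and c: "induced_connected A32_edges I" by (auto simp: iv)
      have ne: "I \<noteq> {}" using c unfolding induced_connected_def by simp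
      have n0: "I \<noteq> {1,3}" using ic_noedge[OF c, of 1 3] by (auto simp: A32_edges_def doubleton_eq_iff)
      have n1: "I \<noteq> {1,4}" using ic_noedge[OF c, of 1 4] by (auto simp: A32_edges_def doubleton_eq_iff)
      have n2: "I \<noteq> {3,4}" using ic_noedge[OF c, of 3 4] by (auto simp: A32_edges_def doubleton_eq_iff)
      have n3: "I \<noteq> {1,3,4}" using ic_noedge[OF c, of 1 3] by (auto simp: A32_edges_def doubleton_eq_iff)
      show "I \<in> SA32" using I ne n0 n1 n2 n3 unfolding pow4 SA32_def by simp
    qed
  next
    show "SA32 \<subseteq> {I. I \<subseteq> {1..4} \<and> induced_connected A32_edges I}"
      unfolding SA32_def using ic_A32_s1 ic_A32_s2 ic_A32_s3 ic_A32_s4 ic_A32_s12 ic_A32_s23 ic_A32_s24 ic_A32_s123 ic_A32_s124 ic_A32_s234 ic_A32_s1234 by (auto simp: iv)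
  qed
  have "csa 4 A32_edges = hyp 4 ` {I. I \<subseteq> {1..4} \<and> induced_connected A32_edges I}" unfolding csa_def by auto
  then show ?thesis unfolding e .
qed
lemma not_factored_A32: "\<not> factored 4 (csa 4 A32_edges)"
proof
  assume "factored 4 (csa 4 A32_edges)"
  then obtain P where np: "nice_partition 4 (csa 4 A32_edges) P" unfolding factored_def by blast
  note A = csa_A32
  have finS: "finite SA32" by (simp add: SA32_def)
  have Sok: "\<forall>I\<in>SA32. I \<subseteq> {1..4} \<and> I \<noteq> {}" by (simp add: SA32_def)
  obtain blk where blk: "\<forall>I\<in>SA32. blk I \<in> P \<and> hyp 4 I \<in> blk I" using blk_exists[OF np A] by blast
  have m_s1: "{1} \<in> SA32" by (simp add: SA32_def)
  have p_s1: "blk {1} \<in> P" and h_s1: "hyp 4 {1} \<in> blk {1}" using blk m_s1 by auto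
  have m_s2: "{2} \<in> SA32" by (simp add: SA32_def)
  have p_s2: "blk {2} \<in> P" and h_s2: "hyp 4 {2} \<in> blk {2}" using blk m_s2 by auto
  have m_s3: "{3} \<in> SA32" by (simp add: SA32_def)
  have p_s3: "blk {3} \<in> P" and h_s3: "hyp 4 {3} \<in> blk {3}" using blk m_s3 by auto
  have m_s4: "{4} \<in> SA32" by (simp add: SA32_def)
  have p_s4: "blk {4} \<in> P" and h_s4: "hyp 4 {4} \<in> blk {4}" using blk m_s4 by auto
  have m_s12: "{1,2} \<in> SA32" by (simp add: SA32_def)
  have p_s12: "blk {1,2} \<in> P" and h_s12: "hyp 4 {1,2} \<in> blk {1,2}" using blk m_s12 by auto
  have m_s23: "{2,3} \<in> SA32" by (simp add: SA32_def)
  have p_s23: "blk {2,3} \<in> P" and h_s23: "hyp 4 {2,3} \<in> blk {2,3}" using blk m_s23 by auto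
  have m_s24: "{2,4} \<in> SA32" by (simp add: SA32_def)
  have p_s24: "blk {2,4} \<in> P" and h_s24: "hyp 4 {2,4} \<in> blk {2,4}" using blk m_s24 by auto
  have m_s123: "{1,2,3} \<in> SA32" by (simp add: SA32_def)
  have p_s123: "blk {1,2,3} \<in> P" and h_s123: "hyp 4 {1,2,3} \<in> blk {1,2,3}" using blk m_s123 by auto
  have m_s124: "{1,2,4} \<in> SA32" by (simp add: SA32_def)
  have p_s124: "blk {1,2,4} \<in> P" and h_s124: "hyp 4 {1,2,4} \<in> blk {1,2,4}" using blk m_s124 by auto
  have m_s234: "{2,3,4} \<in> SA32" by (simp add: SA32_def)
  have p_s234: "blk {2,3,4} \<in> P" and h_s234: "hyp 4 {2,3,4} \<in> blk {2,3,4}" using blk m_s234 by auto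
  have m_s1234: "{1,2,3,4} \<in> SA32" by (simp add: SA32_def)
  have p_s1234: "blk {1,2,3,4} \<in> P" and h_s1234: "hyp 4 {1,2,3,4} \<in> blk {1,2,3,4}" using blk m_s1234 by auto
  have f0: "blk {1,2} \<noteq> blk {1,2,3,4}"
  proof
    assume e: "blk {1,2} = blk {1,2,3,4}"
    have neq: "({1,2}::nat set) \<noteq> {1,2,3,4}"
    proof
      assume "({1,2}::nat set) = {1,2,3,4}"
      then have "(3::nat) \<in> {1,2} \<longleftrightarrow> (3::nat) \<in> {1,2,3,4}" by simp
      then show False by simp
    qed
    have s1: "sum (wv (3) (-3) (-6) (6)) {1,2} = 0" by (simp add: wv_simps)
    have s2: "sum (wv (3) (-3) (-6) (6)) {1,2,3,4} = 0" by (simp add: wv_simps)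
    have sa: "\<forall>I\<in>SA32. sum (wv (3) (-3) (-6) (6)) I = 0 \<longrightarrow> I = {1,2} \<or> I = {1,2,3,4}" by (simp add: SA32_def wv_simps)
    have h2: "hyp 4 {1,2,3,4} \<in> blk {1,2}" using h_s1234 e by simp
    show False by (rule pair_blk[OF np A Sok m_s12 m_s1234 neq wv_amb s1 s2 sa p_s12 h_s12 h2])
  qed
  have f1: "blk {1,2,3} \<noteq> blk {2,3,4}"
  proof
    assume e: "blk {1,2,3} = blk {2,3,4}"
    have neq: "({1,2,3}::nat set) \<noteq> {2,3,4}"
    proof
      assume "({1,2,3}::nat set) = {2,3,4}"
      then have "(1::nat) \<in> {1,2,3} \<longleftrightarrow> (1::nat) \<in> {2,3,4}" by simp
      then show False by simp
    qed
    have s1: "sum (wv (-3) (-4) (7) (-3)) {1,2,3} = 0" by (simp add: wv_simps)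
    have s2: "sum (wv (-3) (-4) (7) (-3)) {2,3,4} = 0" by (simp add: wv_simps)
    have sa: "\<forall>I\<in>SA32. sum (wv (-3) (-4) (7) (-3)) I = 0 \<longrightarrow> I = {1,2,3} \<or> I = {2,3,4}" by (simp add: SA32_def wv_simps)
    have h2: "hyp 4 {2,3,4} \<in> blk {1,2,3}" using h_s234 e by simp
    show False by (rule pair_blk[OF np A Sok m_s123 m_s234 neq wv_amb s1 s2 sa p_s123 h_s123 h2])
  qed
  have f2: "blk {1,2} \<noteq> blk {2,3}"
  proof
    assume e: "blk {1,2} = blk {2,3}"
    have neq: "({1,2}::nat set) \<noteq> {2,3}"
    proof
      assume "({1,2}::nat set) = {2,3}"
      then have "(1::nat) \<in> {1,2} \<longleftrightarrow> (1::nat) \<in> {2,3}" by simp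
      then show False by simp
    qed
    have s1: "sum (wv (5) (-5) (5) (-6)) {1,2} = 0" by (simp add: wv_simps)
    have s2: "sum (wv (5) (-5) (5) (-6)) {2,3} = 0" by (simp add: wv_simps)
    have sa: "\<forall>I\<in>SA32. sum (wv (5) (-5) (5) (-6)) I = 0 \<longrightarrow> I = {1,2} \<or> I = {2,3}" by (simp add: SA32_def wv_simps)
    have h2: "hyp 4 {2,3} \<in> blk {1,2}" using h_s23 e by simp
    show False by (rule pair_blk[OF np A Sok m_s12 m_s23 neq wv_amb s1 s2 sa p_s12 h_s12 h2])
  qed
  have f3: "blk {1,2} \<noteq> blk {2,4}"
  proof
    assume e: "blk {1,2} = blk {2,4}"
    have neq: "({1,2}::nat set) \<noteq> {2,4}"
    proof
      assume "({1,2}::nat set) = {2,4}"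
      then have "(1::nat) \<in> {1,2} \<longleftrightarrow> (1::nat) \<in> {2,4}" by simp
      then show False by simp
    qed
    have s1: "sum (wv (6) (-6) (9) (6)) {1,2} = 0" by (simp add: wv_simps)
    have s2: "sum (wv (6) (-6) (9) (6)) {2,4} = 0" by (simp add: wv_simps)
    have sa: "\<forall>I\<in>SA32. sum (wv (6) (-6) (9) (6)) I = 0 \<longrightarrow> I = {1,2} \<or> I = {2,4}" by (simp add: SA32_def wv_simps)
    have h2: "hyp 4 {2,4} \<in> blk {1,2}" using h_s24 e by simp
    show False by (rule pair_blk[OF np A Sok m_s12 m_s24 neq wv_amb s1 s2 sa p_s12 h_s12 h2])
  qed
  have f4: "blk {2,4} \<noteq> blk {1,2,3,4}"
  proof
    assume e: "blk {2,4} = blk {1,2,3,4}"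
    have neq: "({2,4}::nat set) \<noteq> {1,2,3,4}"
    proof
      assume "({2,4}::nat set) = {1,2,3,4}"
      then have "(1::nat) \<in> {2,4} \<longleftrightarrow> (1::nat) \<in> {1,2,3,4}" by simp
      then show False by simp
    qed
    have s1: "sum (wv (3) (-1) (-3) (1)) {2,4} = 0" by (simp add: wv_simps)
    have s2: "sum (wv (3) (-1) (-3) (1)) {1,2,3,4} = 0" by (simp add: wv_simps)
    have sa: "\<forall>I\<in>SA32. sum (wv (3) (-1) (-3) (1)) I = 0 \<longrightarrow> I = {2,4} \<or> I = {1,2,3,4}" by (simp add: SA32_def wv_simps)
    have h2: "hyp 4 {1,2,3,4} \<in> blk {2,4}" using h_s1234 e by simp
    show False by (rule pair_blk[OF np A Sok m_s24 m_s1234 neq wv_amb s1 s2 sa p_s24 h_s24 h2])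
  qed
  have f5: "blk {1,2,3} \<noteq> blk {1,2,4}"
  proof
    assume e: "blk {1,2,3} = blk {1,2,4}"
    have neq: "({1,2,3}::nat set) \<noteq> {1,2,4}"
    proof
      assume "({1,2,3}::nat set) = {1,2,4}"
      then have "(3::nat) \<in> {1,2,3} \<longleftrightarrow> (3::nat) \<in> {1,2,4}" by simp
      then show False by simp
    qed
    have s1: "sum (wv (-5) (6) (-1) (-1)) {1,2,3} = 0" by (simp add: wv_simps)
    have s2: "sum (wv (-5) (6) (-1) (-1)) {1,2,4} = 0" by (simp add: wv_simps)
    have sa: "\<forall>I\<in>SA32. sum (wv (-5) (6) (-1) (-1)) I = 0 \<longrightarrow> I = {1,2,3} \<or> I = {1,2,4}" by (simp add: SA32_def wv_simps)
    have h2: "hyp 4 {1,2,4} \<in> blk {1,2,3}" using h_s124 e by simp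
    show False by (rule pair_blk[OF np A Sok m_s123 m_s124 neq wv_amb s1 s2 sa p_s123 h_s123 h2])
  qed
  have f6: "blk {2} \<noteq> blk {1,2,3,4}"
  proof
    assume e: "blk {2} = blk {1,2,3,4}"
    have neq: "({2}::nat set) \<noteq> {1,2,3,4}"
    proof
      assume "({2}::nat set) = {1,2,3,4}"
      then have "(1::nat) \<in> {2} \<longleftrightarrow> (1::nat) \<in> {1,2,3,4}" by simp
      then show False by simp
    qed
    have s1: "sum (wv (-1) (0) (-3) (4)) {2} = 0" by (simp add: wv_simps)
    have s2: "sum (wv (-1) (0) (-3) (4)) {1,2,3,4} = 0" by (simp add: wv_simps)
    have sa: "\<forall>I\<in>SA32. sum (wv (-1) (0) (-3) (4)) I = 0 \<longrightarrow> I = {2} \<or> I = {1,2,3,4}" by (simp add: SA32_def wv_simps)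
    have h2: "hyp 4 {1,2,3,4} \<in> blk {2}" using h_s1234 e by simp
    show False by (rule pair_blk[OF np A Sok m_s2 m_s1234 neq wv_amb s1 s2 sa p_s2 h_s2 h2])
  qed
  have f7: "blk {1,2} \<noteq> blk {2,3,4}"
  proof
    assume e: "blk {1,2} = blk {2,3,4}"
    have neq: "({1,2}::nat set) \<noteq> {2,3,4}"
    proof
      assume "({1,2}::nat set) = {2,3,4}"
      then have "(1::nat) \<in> {1,2} \<longleftrightarrow> (1::nat) \<in> {2,3,4}" by simp
      then show False by simp
    qed
    have s1: "sum (wv (-6) (6) (-2) (-4)) {1,2} = 0" by (simp add: wv_simps)
    have s2: "sum (wv (-6) (6) (-2) (-4)) {2,3,4} = 0" by (simp add: wv_simps)
    have sa: "\<forall>I\<in>SA32. sum (wv (-6) (6) (-2) (-4)) I = 0 \<longrightarrow> I = {1,2} \<or> I = {2,3,4}" by (simp add: SA32_def wv_simps)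
    have h2: "hyp 4 {2,3,4} \<in> blk {1,2}" using h_s234 e by simp
    show False by (rule pair_blk[OF np A Sok m_s12 m_s234 neq wv_amb s1 s2 sa p_s12 h_s12 h2])
  qed
  have f8: "blk {2} \<noteq> blk {1,2,3}"
  proof
    assume e: "blk {2} = blk {1,2,3}"
    have neq: "({2}::nat set) \<noteq> {1,2,3}"
    proof
      assume "({2}::nat set) = {1,2,3}"
      then have "(1::nat) \<in> {2} \<longleftrightarrow> (1::nat) \<in> {1,2,3}" by simp
      then show False by simp
    qed
    have s1: "sum (wv (6) (0) (-6) (3)) {2} = 0" by (simp add: wv_simps)
    have s2: "sum (wv (6) (0) (-6) (3)) {1,2,3} = 0" by (simp add: wv_simps)
    have sa: "\<forall>I\<in>SA32. sum (wv (6) (0) (-6) (3)) I = 0 \<longrightarrow> I = {2} \<or> I = {1,2,3}" by (simp add: SA32_def wv_simps)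
    have h2: "hyp 4 {1,2,3} \<in> blk {2}" using h_s123 e by simp
    show False by (rule pair_blk[OF np A Sok m_s2 m_s123 neq wv_amb s1 s2 sa p_s2 h_s2 h2])
  qed
  have f9: "blk {2} \<noteq> blk {2,3,4}"
  proof
    assume e: "blk {2} = blk {2,3,4}"
    have neq: "({2}::nat set) \<noteq> {2,3,4}"
    proof
      assume "({2}::nat set) = {2,3,4}"
      then have "(3::nat) \<in> {2} \<longleftrightarrow> (3::nat) \<in> {2,3,4}" by simp
      then show False by simp
    qed
    have s1: "sum (wv (4) (0) (-9) (9)) {2} = 0" by (simp add: wv_simps)
    have s2: "sum (wv (4) (0) (-9) (9)) {2,3,4} = 0" by (simp add: wv_simps)
    have sa: "\<forall>I\<in>SA32. sum (wv (4) (0) (-9) (9)) I = 0 \<longrightarrow> I = {2} \<or> I = {2,3,4}" by (simp add: SA32_def wv_simps)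
    have h2: "hyp 4 {2,3,4} \<in> blk {2}" using h_s234 e by simp
    show False by (rule pair_blk[OF np A Sok m_s2 m_s234 neq wv_amb s1 s2 sa p_s2 h_s2 h2])
  qed
  have f10: "blk {2,3} \<noteq> blk {2,4}"
  proof
    assume e: "blk {2,3} = blk {2,4}"
    have neq: "({2,3}::nat set) \<noteq> {2,4}"
    proof
      assume "({2,3}::nat set) = {2,4}"
      then have "(3::nat) \<in> {2,3} \<longleftrightarrow> (3::nat) \<in> {2,4}" by simp
      then show False by simp
    qed
    have s1: "sum (wv (-4) (6) (-6) (-6)) {2,3} = 0" by (simp add: wv_simps)
    have s2: "sum (wv (-4) (6) (-6) (-6)) {2,4} = 0" by (simp add: wv_simps)
    have sa: "\<forall>I\<in>SA32. sum (wv (-4) (6) (-6) (-6)) I = 0 \<longrightarrow> I = {2,3} \<or> I = {2,4}" by (simp add: SA32_def wv_simps)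
    have h2: "hyp 4 {2,4} \<in> blk {2,3}" using h_s24 e by simp
    show False by (rule pair_blk[OF np A Sok m_s23 m_s24 neq wv_amb s1 s2 sa p_s23 h_s23 h2])
  qed
  have f11: "blk {2,3} \<noteq> blk {1,2,4}"
  proof
    assume e: "blk {2,3} = blk {1,2,4}"
    have neq: "({2,3}::nat set) \<noteq> {1,2,4}"
    proof
      assume "({2,3}::nat set) = {1,2,4}"
      then have "(1::nat) \<in> {2,3} \<longleftrightarrow> (1::nat) \<in> {1,2,4}" by simp
      then show False by simp
    qed
    have s1: "sum (wv (4) (-3) (3) (-1)) {2,3} = 0" by (simp add: wv_simps)
    have s2: "sum (wv (4) (-3) (3) (-1)) {1,2,4} = 0" by (simp add: wv_simps)
    have sa: "\<forall>I\<in>SA32. sum (wv (4) (-3) (3) (-1)) I = 0 \<longrightarrow> I = {2,3} \<or> I = {1,2,4}" by (simp add: SA32_def wv_simps)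
    have h2: "hyp 4 {1,2,4} \<in> blk {2,3}" using h_s124 e by simp
    show False by (rule pair_blk[OF np A Sok m_s23 m_s124 neq wv_amb s1 s2 sa p_s23 h_s23 h2])
  qed
  have f12: "blk {2} \<noteq> blk {1,2,4}"
  proof
    assume e: "blk {2} = blk {1,2,4}"
    have neq: "({2}::nat set) \<noteq> {1,2,4}"
    proof
      assume "({2}::nat set) = {1,2,4}"
      then have "(1::nat) \<in> {2} \<longleftrightarrow> (1::nat) \<in> {1,2,4}" by simp
      then show False by simp
    qed
    have s1: "sum (wv (2) (0) (-6) (-2)) {2} = 0" by (simp add: wv_simps)
    have s2: "sum (wv (2) (0) (-6) (-2)) {1,2,4} = 0" by (simp add: wv_simps)
    have sa: "\<forall>I\<in>SA32. sum (wv (2) (0) (-6) (-2)) I = 0 \<longrightarrow> I = {2} \<or> I = {1,2,4}" by (simp add: SA32_def wv_simps)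
    have h2: "hyp 4 {1,2,4} \<in> blk {2}" using h_s124 e by simp
    show False by (rule pair_blk[OF np A Sok m_s2 m_s124 neq wv_amb s1 s2 sa p_s2 h_s2 h2])
  qed
  have f13: "blk {2,4} \<noteq> blk {1,2,3}"
  proof
    assume e: "blk {2,4} = blk {1,2,3}"
    have neq: "({2,4}::nat set) \<noteq> {1,2,3}"
    proof
      assume "({2,4}::nat set) = {1,2,3}"
      then have "(1::nat) \<in> {2,4} \<longleftrightarrow> (1::nat) \<in> {1,2,3}" by simp
      then show False by simp
    qed
    have s1: "sum (wv (1) (2) (-3) (-2)) {2,4} = 0" by (simp add: wv_simps)
    have s2: "sum (wv (1) (2) (-3) (-2)) {1,2,3} = 0" by (simp add: wv_simps)
    have sa: "\<forall>I\<in>SA32. sum (wv (1) (2) (-3) (-2)) I = 0 \<longrightarrow> I = {2,4} \<or> I = {1,2,3}" by (simp add: SA32_def wv_simps)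
    have h2: "hyp 4 {1,2,3} \<in> blk {2,4}" using h_s123 e by simp
    show False by (rule pair_blk[OF np A Sok m_s24 m_s123 neq wv_amb s1 s2 sa p_s24 h_s24 h2])
  qed
  have f14: "blk {2,3} \<noteq> blk {1,2,3,4}"
  proof
    assume e: "blk {2,3} = blk {1,2,3,4}"
    have neq: "({2,3}::nat set) \<noteq> {1,2,3,4}"
    proof
      assume "({2,3}::nat set) = {1,2,3,4}"
      then have "(1::nat) \<in> {2,3} \<longleftrightarrow> (1::nat) \<in> {1,2,3,4}" by simp
      then show False by simp
    qed
    have s1: "sum (wv (-5) (4) (-4) (5)) {2,3} = 0" by (simp add: wv_simps)
    have s2: "sum (wv (-5) (4) (-4) (5)) {1,2,3,4} = 0" by (simp add: wv_simps)
    have sa: "\<forall>I\<in>SA32. sum (wv (-5) (4) (-4) (5)) I = 0 \<longrightarrow> I = {2,3} \<or> I = {1,2,3,4}" by (simp add: SA32_def wv_simps)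
    have h2: "hyp 4 {1,2,3,4} \<in> blk {2,3}" using h_s1234 e by simp
    show False by (rule pair_blk[OF np A Sok m_s23 m_s1234 neq wv_amb s1 s2 sa p_s23 h_s23 h2])
  qed
  have f15: "blk {1,2,4} \<noteq> blk {2,3,4}"
  proof
    assume e: "blk {1,2,4} = blk {2,3,4}"
    have neq: "({1,2,4}::nat set) \<noteq> {2,3,4}"
    proof
      assume "({1,2,4}::nat set) = {2,3,4}"
      then have "(1::nat) \<in> {1,2,4} \<longleftrightarrow> (1::nat) \<in> {2,3,4}" by simp
      then show False by simp
    qed
    have s1: "sum (wv (6) (-2) (6) (-4)) {1,2,4} = 0" by (simp add: wv_simps)
    have s2: "sum (wv (6) (-2) (6) (-4)) {2,3,4} = 0" by (simp add: wv_simps)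
    have sa: "\<forall>I\<in>SA32. sum (wv (6) (-2) (6) (-4)) I = 0 \<longrightarrow> I = {1,2,4} \<or> I = {2,3,4}" by (simp add: SA32_def wv_simps)
    have h2: "hyp 4 {2,3,4} \<in> blk {1,2,4}" using h_s234 e by simp
    show False by (rule pair_blk[OF np A Sok m_s124 m_s234 neq wv_amb s1 s2 sa p_s124 h_s124 h2])
  qed
  have f16: "\<not> (blk {1} \<noteq> blk {2,3} \<and> blk {2,3} \<noteq> blk {1,2,3} \<and> blk {1} \<noteq> blk {1,2,3})"
    by (rule circ_blk[OF np A finS Sok m_s1 m_s23 m_s123 _ _ p_s1 p_s23 p_s123 h_s1 h_s23 h_s123]) auto
  have f17: "\<not> (blk {1} \<noteq> blk {2,4} \<and> blk {2,4} \<noteq> blk {1,2,4} \<and> blk {1} \<noteq> blk {1,2,4})"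
    by (rule circ_blk[OF np A finS Sok m_s1 m_s24 m_s124 _ _ p_s1 p_s24 p_s124 h_s1 h_s24 h_s124]) auto
  have f18: "\<not> (blk {2} \<noteq> blk {4} \<and> blk {4} \<noteq> blk {2,4} \<and> blk {2} \<noteq> blk {2,4})"
    by (rule circ_blk[OF np A finS Sok m_s2 m_s4 m_s24 _ _ p_s2 p_s4 p_s24 h_s2 h_s4 h_s24]) auto
  have f19: "\<not> (blk {3} \<noteq> blk {1,2} \<and> blk {1,2} \<noteq> blk {1,2,3} \<and> blk {3} \<noteq> blk {1,2,3})"
    by (rule circ_blk[OF np A finS Sok m_s3 m_s12 m_s123 _ _ p_s3 p_s12 p_s123 h_s3 h_s12 h_s123]) auto
  have f20: "\<not> (blk {3} \<noteq> blk {2,4} \<and> blk {2,4} \<noteq> blk {2,3,4} \<and> blk {3} \<noteq> blk {2,3,4})"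
    by (rule circ_blk[OF np A finS Sok m_s3 m_s24 m_s234 _ _ p_s3 p_s24 p_s234 h_s3 h_s24 h_s234]) auto
  have f21: "\<not> (blk {4} \<noteq> blk {1,2,3} \<and> blk {1,2,3} \<noteq> blk {1,2,3,4} \<and> blk {4} \<noteq> blk {1,2,3,4})"
    by (rule circ_blk[OF np A finS Sok m_s4 m_s123 m_s1234 _ _ p_s4 p_s123 p_s1234 h_s4 h_s123 h_s1234]) auto
  show False using f0 f1 f2 f3 f4 f5 f6 f7 f8 f9 f10 f11 f12 f13 f14 f15 f16 f17 f18 f19 f20 f21 by smt
qed
definition SC4 :: "nat set set" where "SC4 = {{1}, {2}, {3}, {4}, {1,2}, {1,4}, {2,3}, {3,4}, {1,2,3}, {1,2,4}, {1,3,4}, {2,3,4}, {1,2,3,4}}"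
lemma ic_C4_s1: "induced_connected C4_edges {1}"
  by (rule ic_star[of 1]) (auto simp: C4_edges_def insert_commute)
lemma ic_C4_s2: "induced_connected C4_edges {2}"
  by (rule ic_star[of 2]) (auto simp: C4_edges_def insert_commute)
lemma ic_C4_s3: "induced_connected C4_edges {3}"
  by (rule ic_star[of 3]) (auto simp: C4_edges_def insert_commute)
lemma ic_C4_s4: "induced_connected C4_edges {4}"
  by (rule ic_star[of 4]) (auto simp: C4_edges_def insert_commute)
lemma ic_C4_s12: "induced_connected C4_edges {1,2}"
  by (rule ic_star[of 1]) (auto simp: C4_edges_def insert_commute)
lemma ic_C4_s14: "induced_connected C4_edges {1,4}"
  by (rule ic_star[of 1]) (auto simp: C4_edges_def insert_commute)
lemma ic_C4_s23: "induced_connected C4_edges {2,3}"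
  by (rule ic_star[of 2]) (auto simp: C4_edges_def insert_commute)
lemma ic_C4_s34: "induced_connected C4_edges {3,4}"
  by (rule ic_star[of 3]) (auto simp: C4_edges_def insert_commute)
lemma ic_C4_s123: "induced_connected C4_edges {1,2,3}"
  by (rule ic_star[of 2]) (auto simp: C4_edges_def insert_commute)
lemma ic_C4_s124: "induced_connected C4_edges {1,2,4}"
  by (rule ic_star[of 1]) (auto simp: C4_edges_def insert_commute)
lemma ic_C4_s134: "induced_connected C4_edges {1,3,4}"
  by (rule ic_star[of 4]) (auto simp: C4_edges_def insert_commute)
lemma ic_C4_s234: "induced_connected C4_edges {2,3,4}"
  by (rule ic_star[of 3]) (auto simp: C4_edges_def insert_commute)
lemma ic_C4_s1234: "induced_connected C4_edges {1,2,3,4}"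
proof -
  have "induced_connected C4_edges ({1,2,3} \<union> {3,4})"
    by (rule ic_union[OF ic_C4_s123 ic_C4_s34]) simp
  then show ?thesis by (simp add: insert_commute)
qed
lemma csa_C4: "csa 4 C4_edges = hyp 4 ` SC4"
proof -
  have e: "{I. I \<subseteq> {1..4} \<and> induced_connected C4_edges I} = SC4"
  proof
    show "{I. I \<subseteq> {1..4} \<and> induced_connected C4_edges I} \<subseteq> SC4"
    proof
      fix I assume "I \<in> {I. I \<subseteq> {1..4} \<and> induced_connected C4_edges I}"
      then have I: "I \<in> Pow {1,2,3,4}" and c: "induced_connected C4_edges I" by (auto simp: iv)
      have ne: "I \<noteq> {}" using c unfolding induced_connected_def by simp
      have n0: "I \<noteq> {1,3}" using ic_noedge[OF c, of 1 3] by (auto simp: C4_edges_def doubleton_eq_iff)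
      have n1: "I \<noteq> {2,4}" using ic_noedge[OF c, of 2 4] by (auto simp: C4_edges_def doubleton_eq_iff)
      show "I \<in> SC4" using I ne n0 n1 unfolding pow4 SC4_def by simp
    qed
  next
    show "SC4 \<subseteq> {I. I \<subseteq> {1..4} \<and> induced_connected C4_edges I}"
      unfolding SC4_def using ic_C4_s1 ic_C4_s2 ic_C4_s3 ic_C4_s4 ic_C4_s12 ic_C4_s14 ic_C4_s23 ic_C4_s34 ic_C4_s123 ic_C4_s124 ic_C4_s134 ic_C4_s234 ic_C4_s1234 by (auto simp: iv)
  qed
  have "csa 4 C4_edges = hyp 4 ` {I. I \<subseteq> {1..4} \<and> induced_connected C4_edges I}" unfolding csa_def by auto
  then show ?thesis unfolding e .
qed
lemma not_factored_C4: "\<not> factored 4 (csa 4 C4_edges)"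
proof
  assume "factored 4 (csa 4 C4_edges)"
  then obtain P where np: "nice_partition 4 (csa 4 C4_edges) P" unfolding factored_def by blast
  note A = csa_C4
  have finS: "finite SC4" by (simp add: SC4_def)
  have Sok: "\<forall>I\<in>SC4. I \<subseteq> {1..4} \<and> I \<noteq> {}" by (simp add: SC4_def)
  obtain blk where blk: "\<forall>I\<in>SC4. blk I \<in> P \<and> hyp 4 I \<in> blk I" using blk_exists[OF np A] by blast
  have m_s1: "{1} \<in> SC4" by (simp add: SC4_def)
  have p_s1: "blk {1} \<in> P" and h_s1: "hyp 4 {1} \<in> blk {1}" using blk m_s1 by auto
  have m_s2: "{2} \<in> SC4" by (simp add: SC4_def)
  have p_s2: "blk {2} \<in> P" and h_s2: "hyp 4 {2} \<in> blk {2}" using blk m_s2 by auto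
  have m_s3: "{3} \<in> SC4" by (simp add: SC4_def)
  have p_s3: "blk {3} \<in> P" and h_s3: "hyp 4 {3} \<in> blk {3}" using blk m_s3 by auto
  have m_s4: "{4} \<in> SC4" by (simp add: SC4_def)
  have p_s4: "blk {4} \<in> P" and h_s4: "hyp 4 {4} \<in> blk {4}" using blk m_s4 by auto
  have m_s12: "{1,2} \<in> SC4" by (simp add: SC4_def)
  have p_s12: "blk {1,2} \<in> P" and h_s12: "hyp 4 {1,2} \<in> blk {1,2}" using blk m_s12 by auto
  have m_s14: "{1,4} \<in> SC4" by (simp add: SC4_def)
  have p_s14: "blk {1,4} \<in> P" and h_s14: "hyp 4 {1,4} \<in> blk {1,4}" using blk m_s14 by auto
  have m_s23: "{2,3} \<in> SC4" by (simp add: SC4_def)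
  have p_s23: "blk {2,3} \<in> P" and h_s23: "hyp 4 {2,3} \<in> blk {2,3}" using blk m_s23 by auto
  have m_s34: "{3,4} \<in> SC4" by (simp add: SC4_def)
  have p_s34: "blk {3,4} \<in> P" and h_s34: "hyp 4 {3,4} \<in> blk {3,4}" using blk m_s34 by auto
  have m_s123: "{1,2,3} \<in> SC4" by (simp add: SC4_def)
  have p_s123: "blk {1,2,3} \<in> P" and h_s123: "hyp 4 {1,2,3} \<in> blk {1,2,3}" using blk m_s123 by auto
  have m_s124: "{1,2,4} \<in> SC4" by (simp add: SC4_def)
  have p_s124: "blk {1,2,4} \<in> P" and h_s124: "hyp 4 {1,2,4} \<in> blk {1,2,4}" using blk m_s124 by auto
  have m_s134: "{1,3,4} \<in> SC4" by (simp add: SC4_def)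
  have p_s134: "blk {1,3,4} \<in> P" and h_s134: "hyp 4 {1,3,4} \<in> blk {1,3,4}" using blk m_s134 by auto
  have m_s234: "{2,3,4} \<in> SC4" by (simp add: SC4_def)
  have p_s234: "blk {2,3,4} \<in> P" and h_s234: "hyp 4 {2,3,4} \<in> blk {2,3,4}" using blk m_s234 by auto
  have m_s1234: "{1,2,3,4} \<in> SC4" by (simp add: SC4_def)
  have p_s1234: "blk {1,2,3,4} \<in> P" and h_s1234: "hyp 4 {1,2,3,4} \<in> blk {1,2,3,4}" using blk m_s1234 by auto
  have f0: "blk {3,4} \<noteq> blk {1,2,4}"
  proof
    assume e: "blk {3,4} = blk {1,2,4}"
    have neq: "({3,4}::nat set) \<noteq> {1,2,4}"
    proof
      assume "({3,4}::nat set) = {1,2,4}"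
      then have "(1::nat) \<in> {3,4} \<longleftrightarrow> (1::nat) \<in> {1,2,4}" by simp
      then show False by simp
    qed
    have s1: "sum (wv (2) (1) (3) (-3)) {3,4} = 0" by (simp add: wv_simps)
    have s2: "sum (wv (2) (1) (3) (-3)) {1,2,4} = 0" by (simp add: wv_simps)
    have sa: "\<forall>I\<in>SC4. sum (wv (2) (1) (3) (-3)) I = 0 \<longrightarrow> I = {3,4} \<or> I = {1,2,4}" by (simp add: SC4_def wv_simps)
    have h2: "hyp 4 {1,2,4} \<in> blk {3,4}" using h_s124 e by simp
    show False by (rule pair_blk[OF np A Sok m_s34 m_s124 neq wv_amb s1 s2 sa p_s34 h_s34 h2])
  qed
  have f1: "blk {1,2} \<noteq> blk {2,3}"
  proof
    assume e: "blk {1,2} = blk {2,3}"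
    have neq: "({1,2}::nat set) \<noteq> {2,3}"
    proof
      assume "({1,2}::nat set) = {2,3}"
      then have "(1::nat) \<in> {1,2} \<longleftrightarrow> (1::nat) \<in> {2,3}" by simp
      then show False by simp
    qed
    have s1: "sum (wv (8) (-8) (8) (4)) {1,2} = 0" by (simp add: wv_simps)
    have s2: "sum (wv (8) (-8) (8) (4)) {2,3} = 0" by (simp add: wv_simps)
    have sa: "\<forall>I\<in>SC4. sum (wv (8) (-8) (8) (4)) I = 0 \<longrightarrow> I = {1,2} \<or> I = {2,3}" by (simp add: SC4_def wv_simps)
    have h2: "hyp 4 {2,3} \<in> blk {1,2}" using h_s23 e by simp
    show False by (rule pair_blk[OF np A Sok m_s12 m_s23 neq wv_amb s1 s2 sa p_s12 h_s12 h2])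
  qed
  have f2: "blk {3,4} \<noteq> blk {1,2,3}"
  proof
    assume e: "blk {3,4} = blk {1,2,3}"
    have neq: "({3,4}::nat set) \<noteq> {1,2,3}"
    proof
      assume "({3,4}::nat set) = {1,2,3}"
      then have "(1::nat) \<in> {3,4} \<longleftrightarrow> (1::nat) \<in> {1,2,3}" by simp
      then show False by simp
    qed
    have s1: "sum (wv (-8) (1) (7) (-7)) {3,4} = 0" by (simp add: wv_simps)
    have s2: "sum (wv (-8) (1) (7) (-7)) {1,2,3} = 0" by (simp add: wv_simps)
    have sa: "\<forall>I\<in>SC4. sum (wv (-8) (1) (7) (-7)) I = 0 \<longrightarrow> I = {3,4} \<or> I = {1,2,3}" by (simp add: SC4_def wv_simps)
    have h2: "hyp 4 {1,2,3} \<in> blk {3,4}" using h_s123 e by simp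
    show False by (rule pair_blk[OF np A Sok m_s34 m_s123 neq wv_amb s1 s2 sa p_s34 h_s34 h2])
  qed
  have f3: "blk {1,4} \<noteq> blk {1,2,3}"
  proof
    assume e: "blk {1,4} = blk {1,2,3}"
    have neq: "({1,4}::nat set) \<noteq> {1,2,3}"
    proof
      assume "({1,4}::nat set) = {1,2,3}"
      then have "(2::nat) \<in> {1,4} \<longleftrightarrow> (2::nat) \<in> {1,2,3}" by simp
      then show False by simp
    qed
    have s1: "sum (wv (3) (2) (-5) (-3)) {1,4} = 0" by (simp add: wv_simps)
    have s2: "sum (wv (3) (2) (-5) (-3)) {1,2,3} = 0" by (simp add: wv_simps)
    have sa: "\<forall>I\<in>SC4. sum (wv (3) (2) (-5) (-3)) I = 0 \<longrightarrow> I = {1,4} \<or> I = {1,2,3}" by (simp add: SC4_def wv_simps)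
    have h2: "hyp 4 {1,2,3} \<in> blk {1,4}" using h_s123 e by simp
    show False by (rule pair_blk[OF np A Sok m_s14 m_s123 neq wv_amb s1 s2 sa p_s14 h_s14 h2])
  qed
  have f4: "blk {1,2,3} \<noteq> blk {1,2,4}"
  proof
    assume e: "blk {1,2,3} = blk {1,2,4}"
    have neq: "({1,2,3}::nat set) \<noteq> {1,2,4}"
    proof
      assume "({1,2,3}::nat set) = {1,2,4}"
      then have "(3::nat) \<in> {1,2,3} \<longleftrightarrow> (3::nat) \<in> {1,2,4}" by simp
      then show False by simp
    qed
    have s1: "sum (wv (-2) (-1) (3) (3)) {1,2,3} = 0" by (simp add: wv_simps)
    have s2: "sum (wv (-2) (-1) (3) (3)) {1,2,4} = 0" by (simp add: wv_simps)
    have sa: "\<forall>I\<in>SC4. sum (wv (-2) (-1) (3) (3)) I = 0 \<longrightarrow> I = {1,2,3} \<or> I = {1,2,4}" by (simp add: SC4_def wv_simps)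
    have h2: "hyp 4 {1,2,4} \<in> blk {1,2,3}" using h_s124 e by simp
    show False by (rule pair_blk[OF np A Sok m_s123 m_s124 neq wv_amb s1 s2 sa p_s123 h_s123 h2])
  qed
  have f5: "blk {1,2} \<noteq> blk {1,3,4}"
  proof
    assume e: "blk {1,2} = blk {1,3,4}"
    have neq: "({1,2}::nat set) \<noteq> {1,3,4}"
    proof
      assume "({1,2}::nat set) = {1,3,4}"
      then have "(2::nat) \<in> {1,2} \<longleftrightarrow> (2::nat) \<in> {1,3,4}" by simp
      then show False by simp
    qed
    have s1: "sum (wv (3) (-3) (-6) (3)) {1,2} = 0" by (simp add: wv_simps)
    have s2: "sum (wv (3) (-3) (-6) (3)) {1,3,4} = 0" by (simp add: wv_simps)
    have sa: "\<forall>I\<in>SC4. sum (wv (3) (-3) (-6) (3)) I = 0 \<longrightarrow> I = {1,2} \<or> I = {1,3,4}" by (simp add: SC4_def wv_simps)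
    have h2: "hyp 4 {1,3,4} \<in> blk {1,2}" using h_s134 e by simp
    show False by (rule pair_blk[OF np A Sok m_s12 m_s134 neq wv_amb s1 s2 sa p_s12 h_s12 h2])
  qed
  have f6: "blk {2,3} \<noteq> blk {1,3,4}"
  proof
    assume e: "blk {2,3} = blk {1,3,4}"
    have neq: "({2,3}::nat set) \<noteq> {1,3,4}"
    proof
      assume "({2,3}::nat set) = {1,3,4}"
      then have "(1::nat) \<in> {2,3} \<longleftrightarrow> (1::nat) \<in> {1,3,4}" by simp
      then show False by simp
    qed
    have s1: "sum (wv (1) (-7) (7) (-8)) {2,3} = 0" by (simp add: wv_simps)
    have s2: "sum (wv (1) (-7) (7) (-8)) {1,3,4} = 0" by (simp add: wv_simps)
    have sa: "\<forall>I\<in>SC4. sum (wv (1) (-7) (7) (-8)) I = 0 \<longrightarrow> I = {2,3} \<or> I = {1,3,4}" by (simp add: SC4_def wv_simps)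
    have h2: "hyp 4 {1,3,4} \<in> blk {2,3}" using h_s134 e by simp
    show False by (rule pair_blk[OF np A Sok m_s23 m_s134 neq wv_amb s1 s2 sa p_s23 h_s23 h2])
  qed
  have f7: "blk {1,4} \<noteq> blk {2,3,4}"
  proof
    assume e: "blk {1,4} = blk {2,3,4}"
    have neq: "({1,4}::nat set) \<noteq> {2,3,4}"
    proof
      assume "({1,4}::nat set) = {2,3,4}"
      then have "(1::nat) \<in> {1,4} \<longleftrightarrow> (1::nat) \<in> {2,3,4}" by simp
      then show False by simp
    qed
    have s1: "sum (wv (3) (6) (-3) (-3)) {1,4} = 0" by (simp add: wv_simps)
    have s2: "sum (wv (3) (6) (-3) (-3)) {2,3,4} = 0" by (simp add: wv_simps)
    have sa: "\<forall>I\<in>SC4. sum (wv (3) (6) (-3) (-3)) I = 0 \<longrightarrow> I = {1,4} \<or> I = {2,3,4}" by (simp add: SC4_def wv_simps)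
    have h2: "hyp 4 {2,3,4} \<in> blk {1,4}" using h_s234 e by simp
    show False by (rule pair_blk[OF np A Sok m_s14 m_s234 neq wv_amb s1 s2 sa p_s14 h_s14 h2])
  qed
  have f8: "blk {1,2} \<noteq> blk {2,3,4}"
  proof
    assume e: "blk {1,2} = blk {2,3,4}"
    have neq: "({1,2}::nat set) \<noteq> {2,3,4}"
    proof
      assume "({1,2}::nat set) = {2,3,4}"
      then have "(1::nat) \<in> {1,2} \<longleftrightarrow> (1::nat) \<in> {2,3,4}" by simp
      then show False by simp
    qed
    have s1: "sum (wv (6) (-6) (-2) (8)) {1,2} = 0" by (simp add: wv_simps)
    have s2: "sum (wv (6) (-6) (-2) (8)) {2,3,4} = 0" by (simp add: wv_simps)
    have sa: "\<forall>I\<in>SC4. sum (wv (6) (-6) (-2) (8)) I = 0 \<longrightarrow> I = {1,2} \<or> I = {2,3,4}" by (simp add: SC4_def wv_simps)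
    have h2: "hyp 4 {2,3,4} \<in> blk {1,2}" using h_s234 e by simp
    show False by (rule pair_blk[OF np A Sok m_s12 m_s234 neq wv_amb s1 s2 sa p_s12 h_s12 h2])
  qed
  have f9: "blk {1,2,4} \<noteq> blk {2,3,4}"
  proof
    assume e: "blk {1,2,4} = blk {2,3,4}"
    have neq: "({1,2,4}::nat set) \<noteq> {2,3,4}"
    proof
      assume "({1,2,4}::nat set) = {2,3,4}"
      then have "(1::nat) \<in> {1,2,4} \<longleftrightarrow> (1::nat) \<in> {2,3,4}" by simp
      then show False by simp
    qed
    have s1: "sum (wv (-6) (3) (-6) (3)) {1,2,4} = 0" by (simp add: wv_simps)
    have s2: "sum (wv (-6) (3) (-6) (3)) {2,3,4} = 0" by (simp add: wv_simps)
    have sa: "\<forall>I\<in>SC4. sum (wv (-6) (3) (-6) (3)) I = 0 \<longrightarrow> I = {1,2,4} \<or> I = {2,3,4}" by (simp add: SC4_def wv_simps)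
    have h2: "hyp 4 {2,3,4} \<in> blk {1,2,4}" using h_s234 e by simp
    show False by (rule pair_blk[OF np A Sok m_s124 m_s234 neq wv_amb s1 s2 sa p_s124 h_s124 h2])
  qed
  have f10: "blk {2,3} \<noteq> blk {1,2,4}"
  proof
    assume e: "blk {2,3} = blk {1,2,4}"
    have neq: "({2,3}::nat set) \<noteq> {1,2,4}"
    proof
      assume "({2,3}::nat set) = {1,2,4}"
      then have "(1::nat) \<in> {2,3} \<longleftrightarrow> (1::nat) \<in> {1,2,4}" by simp
      then show False by simp
    qed
    have s1: "sum (wv (4) (2) (-2) (-6)) {2,3} = 0" by (simp add: wv_simps)
    have s2: "sum (wv (4) (2) (-2) (-6)) {1,2,4} = 0" by (simp add: wv_simps)
    have sa: "\<forall>I\<in>SC4. sum (wv (4) (2) (-2) (-6)) I = 0 \<longrightarrow> I = {2,3} \<or> I = {1,2,4}" by (simp add: SC4_def wv_simps)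
    have h2: "hyp 4 {1,2,4} \<in> blk {2,3}" using h_s124 e by simp
    show False by (rule pair_blk[OF np A Sok m_s23 m_s124 neq wv_amb s1 s2 sa p_s23 h_s23 h2])
  qed
  have f11: "blk {1,2} \<noteq> blk {1,4}"
  proof
    assume e: "blk {1,2} = blk {1,4}"
    have neq: "({1,2}::nat set) \<noteq> {1,4}"
    proof
      assume "({1,2}::nat set) = {1,4}"
      then have "(2::nat) \<in> {1,2} \<longleftrightarrow> (2::nat) \<in> {1,4}" by simp
      then show False by simp
    qed
    have s1: "sum (wv (-2) (2) (-1) (2)) {1,2} = 0" by (simp add: wv_simps)
    have s2: "sum (wv (-2) (2) (-1) (2)) {1,4} = 0" by (simp add: wv_simps)
    have sa: "\<forall>I\<in>SC4. sum (wv (-2) (2) (-1) (2)) I = 0 \<longrightarrow> I = {1,2} \<or> I = {1,4}" by (simp add: SC4_def wv_simps)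
    have h2: "hyp 4 {1,4} \<in> blk {1,2}" using h_s14 e by simp
    show False by (rule pair_blk[OF np A Sok m_s12 m_s14 neq wv_amb s1 s2 sa p_s12 h_s12 h2])
  qed
  have f12: "blk {1,2,3} \<noteq> blk {2,3,4}"
  proof
    assume e: "blk {1,2,3} = blk {2,3,4}"
    have neq: "({1,2,3}::nat set) \<noteq> {2,3,4}"
    proof
      assume "({1,2,3}::nat set) = {2,3,4}"
      then have "(1::nat) \<in> {1,2,3} \<longleftrightarrow> (1::nat) \<in> {2,3,4}" by simp
      then show False by simp
    qed
    have s1: "sum (wv (1) (-7) (6) (1)) {1,2,3} = 0" by (simp add: wv_simps)
    have s2: "sum (wv (1) (-7) (6) (1)) {2,3,4} = 0" by (simp add: wv_simps)
    have sa: "\<forall>I\<in>SC4. sum (wv (1) (-7) (6) (1)) I = 0 \<longrightarrow> I = {1,2,3} \<or> I = {2,3,4}" by (simp add: SC4_def wv_simps)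
    have h2: "hyp 4 {2,3,4} \<in> blk {1,2,3}" using h_s234 e by simp
    show False by (rule pair_blk[OF np A Sok m_s123 m_s234 neq wv_amb s1 s2 sa p_s123 h_s123 h2])
  qed
  have f13: "blk {1,2,3} \<noteq> blk {1,3,4}"
  proof
    assume e: "blk {1,2,3} = blk {1,3,4}"
    have neq: "({1,2,3}::nat set) \<noteq> {1,3,4}"
    proof
      assume "({1,2,3}::nat set) = {1,3,4}"
      then have "(2::nat) \<in> {1,2,3} \<longleftrightarrow> (2::nat) \<in> {1,3,4}" by simp
      then show False by simp
    qed
    have s1: "sum (wv (-2) (3) (-1) (3)) {1,2,3} = 0" by (simp add: wv_simps)
    have s2: "sum (wv (-2) (3) (-1) (3)) {1,3,4} = 0" by (simp add: wv_simps)
    have sa: "\<forall>I\<in>SC4. sum (wv (-2) (3) (-1) (3)) I = 0 \<longrightarrow> I = {1,2,3} \<or> I = {1,3,4}" by (simp add: SC4_def wv_simps)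
    have h2: "hyp 4 {1,3,4} \<in> blk {1,2,3}" using h_s134 e by simp
    show False by (rule pair_blk[OF np A Sok m_s123 m_s134 neq wv_amb s1 s2 sa p_s123 h_s123 h2])
  qed
  have f14: "blk {4} \<noteq> blk {1,3,4}"
  proof
    assume e: "blk {4} = blk {1,3,4}"
    have neq: "({4}::nat set) \<noteq> {1,3,4}"
    proof
      assume "({4}::nat set) = {1,3,4}"
      then have "(1::nat) \<in> {4} \<longleftrightarrow> (1::nat) \<in> {1,3,4}" by simp
      then show False by simp
    qed
    have s1: "sum (wv (-1) (-9) (1) (0)) {4} = 0" by (simp add: wv_simps)
    have s2: "sum (wv (-1) (-9) (1) (0)) {1,3,4} = 0" by (simp add: wv_simps)
    have sa: "\<forall>I\<in>SC4. sum (wv (-1) (-9) (1) (0)) I = 0 \<longrightarrow> I = {4} \<or> I = {1,3,4}" by (simp add: SC4_def wv_simps)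
    have h2: "hyp 4 {1,3,4} \<in> blk {4}" using h_s134 e by simp
    show False by (rule pair_blk[OF np A Sok m_s4 m_s134 neq wv_amb s1 s2 sa p_s4 h_s4 h2])
  qed
  have f15: "blk {1,4} \<noteq> blk {3,4}"
  proof
    assume e: "blk {1,4} = blk {3,4}"
    have neq: "({1,4}::nat set) \<noteq> {3,4}"
    proof
      assume "({1,4}::nat set) = {3,4}"
      then have "(1::nat) \<in> {1,4} \<longleftrightarrow> (1::nat) \<in> {3,4}" by simp
      then show False by simp
    qed
    have s1: "sum (wv (-5) (-9) (-5) (5)) {1,4} = 0" by (simp add: wv_simps)
    have s2: "sum (wv (-5) (-9) (-5) (5)) {3,4} = 0" by (simp add: wv_simps)
    have sa: "\<forall>I\<in>SC4. sum (wv (-5) (-9) (-5) (5)) I = 0 \<longrightarrow> I = {1,4} \<or> I = {3,4}" by (simp add: SC4_def wv_simps)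
    have h2: "hyp 4 {3,4} \<in> blk {1,4}" using h_s34 e by simp
    show False by (rule pair_blk[OF np A Sok m_s14 m_s34 neq wv_amb s1 s2 sa p_s14 h_s14 h2])
  qed
  have f16: "blk {2,3} \<noteq> blk {3,4}"
  proof
    assume e: "blk {2,3} = blk {3,4}"
    have neq: "({2,3}::nat set) \<noteq> {3,4}"
    proof
      assume "({2,3}::nat set) = {3,4}"
      then have "(2::nat) \<in> {2,3} \<longleftrightarrow> (2::nat) \<in> {3,4}" by simp
      then show False by simp
    qed
    have s1: "sum (wv (-9) (4) (-4) (4)) {2,3} = 0" by (simp add: wv_simps)
    have s2: "sum (wv (-9) (4) (-4) (4)) {3,4} = 0" by (simp add: wv_simps)
    have sa: "\<forall>I\<in>SC4. sum (wv (-9) (4) (-4) (4)) I = 0 \<longrightarrow> I = {2,3} \<or> I = {3,4}" by (simp add: SC4_def wv_simps)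
    have h2: "hyp 4 {3,4} \<in> blk {2,3}" using h_s34 e by simp
    show False by (rule pair_blk[OF np A Sok m_s23 m_s34 neq wv_amb s1 s2 sa p_s23 h_s23 h2])
  qed
  have f17: "\<not> (blk {3} \<noteq> blk {1,2} \<and> blk {1,2} \<noteq> blk {1,2,3} \<and> blk {3} \<noteq> blk {1,2,3})"
    by (rule circ_blk[OF np A finS Sok m_s3 m_s12 m_s123 _ _ p_s3 p_s12 p_s123 h_s3 h_s12 h_s123]) auto
  have f18: "\<not> (blk {3} \<noteq> blk {1,4} \<and> blk {1,4} \<noteq> blk {1,3,4} \<and> blk {3} \<noteq> blk {1,3,4})"
    by (rule circ_blk[OF np A finS Sok m_s3 m_s14 m_s134 _ _ p_s3 p_s14 p_s134 h_s3 h_s14 h_s134]) auto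
  have f19: "\<not> (blk {4} \<noteq> blk {1,2} \<and> blk {1,2} \<noteq> blk {1,2,4} \<and> blk {4} \<noteq> blk {1,2,4})"
    by (rule circ_blk[OF np A finS Sok m_s4 m_s12 m_s124 _ _ p_s4 p_s12 p_s124 h_s4 h_s12 h_s124]) auto
  have f20: "\<not> (blk {4} \<noteq> blk {2,3} \<and> blk {2,3} \<noteq> blk {2,3,4} \<and> blk {4} \<noteq> blk {2,3,4})"
    by (rule circ_blk[OF np A finS Sok m_s4 m_s23 m_s234 _ _ p_s4 p_s23 p_s234 h_s4 h_s23 h_s234]) auto
  have f21: "\<not> (blk {4} \<noteq> blk {1,2,3} \<and> blk {1,2,3} \<noteq> blk {1,2,3,4} \<and> blk {4} \<noteq> blk {1,2,3,4})"
    by (rule circ_blk[OF np A finS Sok m_s4 m_s123 m_s1234 _ _ p_s4 p_s123 p_s1234 h_s4 h_s123 h_s1234]) auto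
  have f22: "\<not> (blk {1,2} \<noteq> blk {3,4} \<and> blk {3,4} \<noteq> blk {1,2,3,4} \<and> blk {1,2} \<noteq> blk {1,2,3,4})"
    by (rule circ_blk[OF np A finS Sok m_s12 m_s34 m_s1234 _ _ p_s12 p_s34 p_s1234 h_s12 h_s34 h_s1234]) auto
  have f23: "\<not> (blk {1,4} \<noteq> blk {2,3} \<and> blk {2,3} \<noteq> blk {1,2,3,4} \<and> blk {1,4} \<noteq> blk {1,2,3,4})"
    by (rule circ_blk[OF np A finS Sok m_s14 m_s23 m_s1234 _ _ p_s14 p_s23 p_s1234 h_s14 h_s23 h_s1234]) auto
  show False using f0 f1 f2 f3 f4 f5 f6 f7 f8 f9 f10 f11 f12 f13 f14 f15 f16 f17 f18 f19 f20 f21 f22 f23 by smt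
qed

theorem proposition8p8:
  shows "\<not> factored 4 (csa 4 A32_edges) \<and> \<not> factored 4 (csa 4 C4_edges)"
  using not_factored_A32 not_factored_C4 by blast

end
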